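(* Let $\alpha:\mathbb{V}\to\mathbb{U}$ be a morphism between persistence modules of length $n$. Then for all integers $1\le a\le b\le n$, $$\sum_{b'=1}^{n}\sum_{a'=1}^{b'}\mathcal{M}^{\alpha}(a,b,a',b')\ \le\ \dim S^{\mathbb{V}}_{a,b}-\dim S^{\mathbb{V}}_{a-1,b}=\mathcal{D}^{\mathbb{V}}(a,b),$$ and for all integers $1\le a'\le b'\le n$, $$\sum_{b=1}^{n}\sum_{a=1}^{b}\mathcal{M}^{\alpha}(a,b,a',b')\ \le\ \dim S^{\mathbb{U}}_{a',b'}-\dim S^{\mathbb{U}}_{a'-1,b'}=\mathcal{D}^{\mathbb{U}}(a',b').$$
   Context: Fix a field $\mathbf F$; all vector spaces are finite-dimensional over $\mathbf F$. A persistence module $\mathbb{V}$ of length $n$ consists of vector spaces $V_1,\dots,V_n$ and linear maps $f^{\mathbb V}_i:V_i\to V_{i+1}$ ($1\le i\le n-1$). Conventions: $V_i=0$ for every integer $i\le 0$ or $i\ge n+1$, and every map $f^{\mathbb V}_i$ with domain or codomain $0$ is the zero map (in particular $f^{\mathbb V}_0:0\to V_1$ and $f^{\mathbb V}_n:V_n\to 0$). For integers $a\le b$, $f^{\mathbb V}_{a,b}=f^{\mathbb V}_{b-1}\circ\cdots\circ f^{\mathbb V}_a:V_a\to V_b$, with $f^{\mathbb V}_{a,a}=\mathrm{id}$; also $f^{\mathbb V}_b=f^{\mathbb V}_{b,b+1}$. A morphism $\alpha:\mathbb V\to\mathbb U$ of persistence modules of length $n$ is a family of linear maps $\alpha_i:V_i\to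 U_i$ with $\alpha_{i+1}\circ f^{\mathbb V}_i=f^{\mathbb U}_i\circ\alpha_i$ for all $i$ (with $\alpha_i=0$ for $i$ outside $[1,n]$). For a subspace $A\subseteq U_i$, $\alpha_i^{-1}(A)$ denotes the preimage, so $\alpha_i^{-1}(0)=\ker\alpha_i$. For integers $a,b$ define $S^{\mathbb V}_{a,b}=f^{\mathbb V}_{a,b}(V_a)\cap\ker f^{\mathbb V}_b$ if $1\le a\le b\le n$ and $S^{\mathbb V}_{a,b}=0$ otherwise, and $\mathcal D^{\mathbb V}(a,b)=\dim S^{\mathbb V}_{a,b}-\dim S^{\mathbb V}_{a-1,b}$ (the multiplicity of the interval $[a,b]$ in the barcode of $\mathbb V$). For a morphism $\alpha:\mathbb V\to\mathbb U$ define, for integers $a,b,a',b'$, $$\mathcal X^{\alpha}(a,b,a',b')=\dim\big[S^{\mathbb V}_{a,b}\cap f^{\mathbb V}_{b',b}\big(\alpha_{b'}^{-1}(S^{\mathbb U}_{a',b'})\big)\big]-\dim\big[S^{\mathbb V}_{a,b}\cap f^{\mathbb V}_{b',b}\big(\ker\alpha_{b'}\big)\big]$$ if $b'\le b\le n$, and $\mathcal X^{\alpha}(a,b,a',b')=0$ otherwise. Define $$\mathcal M^{\alpha}(a,b,a',b')=\mathcal X^{\alpha}(a,b,a',b')-\mathcal X^{\alpha}(a-1,b,a',b')-\mathcal X^{\alpha}(a,b,a'-1,b')+\mathcal X^{\alpha}(a-1,b,a'-1,b').$$ *)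

theory Defs
  imports Complex_Main
begin

text \<open>
  A persistence module of length n over a field 'f is given by
  an ambient vector space (type 'v with scalar multiplication scale, assumed to
  satisfy vector_space scale), a family V :: nat => 'v set of finite-dimensional
  subspaces (only V 1, ..., V n matter) and maps f :: nat => 'v => 'v, where
  f i is linear on V i and maps V i into V (i+1) for 1 <= i < n.
\<close>

definition lin_on :: "('f::field \<Rightarrow> 'v::ab_group_add \<Rightarrow> 'v) \<Rightarrow> ('f \<Rightarrow> 'w::ab_group_add \<Rightarrow> 'w)
    \<Rightarrow> 'v set \<Rightarrow> ('v \<Rightarrow> 'w) \<Rightarrow> bool" where
  "lin_on s1 s2 A g \<longleftrightarrow>
     (\<forall>x\<in>A. \<forall>y\<in>A. g (x + y) = g x + g y) \<and> (\<forall>c. \<forall>x\<in>A. g (s1 c x) = s2 c (g x))"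

definition pers_module :: "('f::field \<Rightarrow> 'v::ab_group_add \<Rightarrow> 'v) \<Rightarrow> nat
    \<Rightarrow> (nat \<Rightarrow> 'v set) \<Rightarrow> (nat \<Rightarrow> 'v \<Rightarrow> 'v) \<Rightarrow> bool" where
  "pers_module s n V f \<longleftrightarrow>
     vector_space s \<and>
     (\<forall>i. 1 \<le> i \<and> i \<le> n \<longrightarrow> module.subspace s (V i)
          \<and> (\<exists>B. finite B \<and> B \<subseteq> V i \<and> V i = module.span s B)) \<and>
     (\<forall>i. 1 \<le> i \<and> i < n \<longrightarrow> lin_on s s (V i) (f i) \<and> f i ` V i \<subseteq> V (Suc i))"

definition pm_morphism :: "('f::field \<Rightarrow> 'v::ab_group_add \<Rightarrow> 'v) \<Rightarrow> ('f \<Rightarrow> 'u::ab_group_add \<Rightarrow> 'u)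
    \<Rightarrow> nat \<Rightarrow> (nat \<Rightarrow> 'v set) \<Rightarrow> (nat \<Rightarrow> 'v \<Rightarrow> 'v) \<Rightarrow> (nat \<Rightarrow> 'u set) \<Rightarrow> (nat \<Rightarrow> 'u \<Rightarrow> 'u)
    \<Rightarrow> (nat \<Rightarrow> 'v \<Rightarrow> 'u) \<Rightarrow> bool" where
  "pm_morphism sV sU n V f U g \<alpha> \<longleftrightarrow>
     (\<forall>i. 1 \<le> i \<and> i \<le> n \<longrightarrow> lin_on sV sU (V i) (\<alpha> i) \<and> \<alpha> i ` V i \<subseteq> U i) \<and>
     (\<forall>i. 1 \<le> i \<and> i < n \<longrightarrow> (\<forall>x\<in>V i. \<alpha> (Suc i) (f i x) = g i (\<alpha> i x)))"

definition pmV :: "nat \<Rightarrow> (nat \<Rightarrow> 'v::zero set) \<Rightarrow> nat \<Rightarrow> 'v set" where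
  "pmV n V i = (if 1 \<le> i \<and> i \<le> n then V i else {0})"

definition pmf :: "nat \<Rightarrow> (nat \<Rightarrow> 'v \<Rightarrow> 'v::zero) \<Rightarrow> nat \<Rightarrow> 'v \<Rightarrow> 'v" where
  "pmf n f i x = (if 1 \<le> i \<and> i < n then f i x else 0)"

text \<open>f_{a,b} = f_{b-1} o ... o f_a (for a <= b), f_{a,a} = id.\<close>
fun fcomp :: "nat \<Rightarrow> (nat \<Rightarrow> 'v \<Rightarrow> 'v::zero) \<Rightarrow> nat \<Rightarrow> nat \<Rightarrow> 'v \<Rightarrow> 'v" where
  "fcomp n f a 0 = id"
| "fcomp n f a (Suc k) = pmf n f (a + k) \<circ> fcomp n f a k"

definition fab :: "nat \<Rightarrow> (nat \<Rightarrow> 'v \<Rightarrow> 'v::zero) \<Rightarrow> nat \<Rightarrow> nat \<Rightarrow> 'v \<Rightarrow> 'v" where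
  "fab n f a b = fcomp n f a (b - a)"

definition kerf :: "nat \<Rightarrow> (nat \<Rightarrow> 'v::zero set) \<Rightarrow> (nat \<Rightarrow> 'v \<Rightarrow> 'v) \<Rightarrow> nat \<Rightarrow> 'v set" where
  "kerf n V f b = {x \<in> pmV n V b. pmf n f b x = 0}"

definition Sab :: "nat \<Rightarrow> (nat \<Rightarrow> 'v::zero set) \<Rightarrow> (nat \<Rightarrow> 'v \<Rightarrow> 'v) \<Rightarrow> nat \<Rightarrow> nat \<Rightarrow> 'v set" where
  "Sab n V f a b = (if 1 \<le> a \<and> a \<le> b \<and> b \<le> n
      then fab n f a b ` pmV n V a \<inter> kerf n V f b else {0})"

definition pmD :: "('f::field \<Rightarrow> 'v::ab_group_add \<Rightarrow> 'v) \<Rightarrow> nat \<Rightarrow> (nat \<Rightarrow> 'v set)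
    \<Rightarrow> (nat \<Rightarrow> 'v \<Rightarrow> 'v) \<Rightarrow> nat \<Rightarrow> nat \<Rightarrow> int" where
  "pmD s n V f a b = int (vector_space.dim s (Sab n V f a b))
                   - int (vector_space.dim s (Sab n V f (a - 1) b))"

definition apre :: "nat \<Rightarrow> (nat \<Rightarrow> 'v::zero set) \<Rightarrow> (nat \<Rightarrow> 'v \<Rightarrow> 'u) \<Rightarrow> nat \<Rightarrow> 'u set \<Rightarrow> 'v set" where
  "apre n V \<alpha> i A = {x \<in> pmV n V i. \<alpha> i x \<in> A}"

definition pmX :: "('f::field \<Rightarrow> 'v::ab_group_add \<Rightarrow> 'v) \<Rightarrow> nat
    \<Rightarrow> (nat \<Rightarrow> 'v set) \<Rightarrow> (nat \<Rightarrow> 'v \<Rightarrow> 'v) \<Rightarrow> (nat \<Rightarrow> 'u::ab_group_add set) \<Rightarrow> (nat \<Rightarrow> 'u \<Rightarrow> 'u)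
    \<Rightarrow> (nat \<Rightarrow> 'v \<Rightarrow> 'u) \<Rightarrow> nat \<Rightarrow> nat \<Rightarrow> nat \<Rightarrow> nat \<Rightarrow> int" where
  "pmX sV n V f U g \<alpha> a b a' b' =
     (if b' \<le> b \<and> b \<le> n then
        int (vector_space.dim sV (Sab n V f a b \<inter> fab n f b' b ` apre n V \<alpha> b' (Sab n U g a' b')))
      - int (vector_space.dim sV (Sab n V f a b \<inter> fab n f b' b ` apre n V \<alpha> b' {0}))
      else 0)"

definition pmM :: "('f::field \<Rightarrow> 'v::ab_group_add \<Rightarrow> 'v) \<Rightarrow> nat
    \<Rightarrow> (nat \<Rightarrow> 'v set) \<Rightarrow> (nat \<Rightarrow> 'v \<Rightarrow> 'v) \<Rightarrow> (nat \<Rightarrow> 'u::ab_group_add set) \<Rightarrow> (nat \<Rightarrow> 'u \<Rightarrow> 'u)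
    \<Rightarrow> (nat \<Rightarrow> 'v \<Rightarrow> 'u) \<Rightarrow> nat \<Rightarrow> nat \<Rightarrow> nat \<Rightarrow> nat \<Rightarrow> int" where
  "pmM sV n V f U g \<alpha> a b a' b' =
       pmX sV n V f U g \<alpha> a b a' b' - pmX sV n V f U g \<alpha> (a - 1) b a' b'
     - pmX sV n V f U g \<alpha> a b (a' - 1) b' + pmX sV n V f U g \<alpha> (a - 1) b (a' - 1) b'"

end

theory Submission
  imports Defs
begin



context vector_space begin

lemma fdim_indep_finite: "finite W \<Longrightarrow> T \<subseteq> span W \<Longrightarrow> B \<subseteq> T \<Longrightarrow> independent B \<Longrightarrow> finite B"
  by (meson independent_span_bound order_trans)

lemma dim_mono_fd:
  assumes "finite W" "T \<subseteq> span W" "S \<subseteq> T" shows "dim S \<le> dim T"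
proof -
  obtain B where B: "B \<subseteq> S" "independent B" "S \<subseteq> span B" "card B = dim S"
    using basis_exists by blast
  have "B \<subseteq> T" using B(1) assms(3) by (rule order_trans)
  then obtain C where C: "B \<subseteq> C" "C \<subseteq> T" "independent C" "T \<subseteq> span C"
    using maximal_independent_subset_extend[of B T] B(2) by metis
  have "finite C" using fdim_indep_finite[OF assms(1,2) C(2,3)] .
  hence "card B \<le> card C" using C(1) by (rule card_mono)
  moreover have "card C = dim T" using basis_card_eq_dim[OF C(2,4,3)] .
  ultimately show ?thesis using B by simp
qed

lemma dim_zero_sub: "S \<subseteq> {0} \<Longrightarrow> dim S = 0"
  using dim_le_card[of S "{}"] by simp

end




context vector_space begin

lemma dim_sums_Int_fd:
  assumes "subspace S" "subspace T" "finite WS" "S \<subseteq> span WS" "finite WT" "T \<subseteq> span WT"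
  shows "dim {x + y |x y. x \<in> S \<and> y \<in> T} + dim(S \<inter> T) = dim S + dim T" (is "dim ?ST + _ = _")
proof -
  obtain B where B: "B \<subseteq> S \<inter> T" "S \<inter> T \<subseteq> span B"
             and indB: "independent B"
             and cardB: "card B = dim (S \<inter> T)"
    using basis_exists by metis
  then obtain C D where "B \<subseteq> C" "C \<subseteq> S" "independent C" "S \<subseteq> span C"
                    and "B \<subseteq> D" "D \<subseteq> T" "independent D" "T \<subseteq> span D"
    using maximal_independent_subset_extend
    by (metis Int_subset_iff \<open>B \<subseteq> S \<inter> T\<close> indB)
  then have "finite C" "finite D"
    using fdim_indep_finite assms by blast+
  then have "finite B" using \<open>B \<subseteq> C\<close> finite_subset by blast
  have Beq: "B = C \<inter> D"
  proof (rule spanning_subset_independent [symmetric])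
    show "independent (C \<inter> D)"
      by (meson \<open>independent C\<close> independent_mono inf.cobounded1)
  qed (use B \<open>C \<subseteq> S\<close> \<open>D \<subseteq> T\<close> \<open>B \<subseteq> C\<close> \<open>B \<subseteq> D\<close> in auto)
  then have Deq: "D = B \<union> (D - C)"
    by blast
  have CUD: "C \<union> D \<subseteq> ?ST"
  proof (simp, intro conjI)
    show "C \<subseteq> ?ST"
      using span_zero span_minimal [OF _ \<open>subspace T\<close>] \<open>C \<subseteq> S\<close> by force
    show "D \<subseteq> ?ST"
      using span_zero span_minimal [OF _ \<open>subspace S\<close>] \<open>D \<subseteq> T\<close> by force
  qed
  have "a v = 0" if 0: "(\<Sum>v\<in>C. a v *s v) + (\<Sum>v\<in>D - C. a v *s v) = 0"
                 and v: "v \<in> C \<union> (D-C)" for a v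
  proof -
    have CsS: "\<And>x. x \<in> C \<Longrightarrow> a x *s x \<in> S"
      using \<open>C \<subseteq> S\<close> \<open>subspace S\<close> subspace_scale by auto
    have eq: "(\<Sum>v\<in>D - C. a v *s v) = - (\<Sum>v\<in>C. a v *s v)"
      using that add_eq_0_iff by blast
    have "(\<Sum>v\<in>D - C. a v *s v) \<in> S"
      by (simp add: eq CsS \<open>subspace S\<close> subspace_neg subspace_sum)
    moreover have "(\<Sum>v\<in>D - C. a v *s v) \<in> T"
      apply (rule subspace_sum [OF \<open>subspace T\<close>])
      by (meson DiffD1 \<open>D \<subseteq> T\<close> \<open>subspace T\<close> subset_eq subspace_def)
    ultimately have "(\<Sum>v \<in> D-C. a v *s v) \<in> span B"
      using B by blast
    then obtain e where e: "(\<Sum>v\<in>B. e v *s v) = (\<Sum>v \<in> D-C. a v *s v)"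
      using span_finite [OF \<open>finite B\<close>] by force
    define cc where "cc x = (if x \<in> B then a x + e x else a x)" for x
    have [simp]: "C \<inter> B = B" "D \<inter> B = B" "C \<inter> - B = C-D" "B \<inter> (D - C) = {}"
      using \<open>B \<subseteq> C\<close> \<open>B \<subseteq> D\<close> Beq by blast+
    have f2: "(\<Sum>v\<in>C \<inter> D. e v *s v) = (\<Sum>v\<in>D - C. a v *s v)"
      using Beq e by presburger
    have f3: "(\<Sum>v\<in>C \<union> D. a v *s v) = (\<Sum>v\<in>C - D. a v *s v) + (\<Sum>v\<in>D - C. a v *s v) + (\<Sum>v\<in>C \<inter> D. a v *s v)"
      using \<open>finite C\<close> \<open>finite D\<close> sum.union_diff2 by blast
    have f4: "(\<Sum>v\<in>C \<union> (D - C). a v *s v) = (\<Sum>v\<in>C. a v *s v) + (\<Sum>v\<in>D - C. a v *s v)"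
      by (meson Diff_disjoint \<open>finite C\<close> \<open>finite D\<close> finite_Diff sum.union_disjoint)
    have "(\<Sum>v\<in>C. cc v *s v) = 0"
      using 0 f2 f3 f4
      apply (simp add: cc_def Beq \<open>finite C\<close> sum.If_cases algebra_simps sum.distrib
          if_distrib if_distribR)
      apply (simp add: add.commute add.left_commute diff_eq)
      done
    then have "\<And>v. v \<in> C \<Longrightarrow> cc v = 0"
      using independentD[OF \<open>independent C\<close> \<open>finite C\<close> order_refl] by blast
    then have C0: "\<And>v. v \<in> C - B \<Longrightarrow> a v = 0"
      by (simp add: cc_def Beq) meson
    then have [simp]: "(\<Sum>x\<in>C - B. a x *s x) = 0"
      by simp
    have "(\<Sum>x\<in>C. a x *s x) = (\<Sum>x\<in>B. a x *s x)"
    proof -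
      have "C - D = C - B"
        using Beq by blast
      then show ?thesis
        using Beq \<open>(\<Sum>x\<in>C - B. a x *s x) = 0\<close> f3 f4 by auto
    qed
    with 0 have Dcc0: "(\<Sum>v\<in>D. a v *s v) = 0"
      by (subst Deq) (simp add: \<open>finite B\<close> \<open>finite D\<close> sum_Un)
    then have D0: "\<And>v. v \<in> D \<Longrightarrow> a v = 0"
      using independentD[OF \<open>independent D\<close> \<open>finite D\<close> order_refl] by blast
    show ?thesis
      using v C0 D0 Beq by blast
  qed
  then have "independent (C \<union> (D - C))"
    using dependent_finite[of "C \<union> (D - C)"] \<open>finite C\<close> \<open>finite D\<close>
    by (auto simp add: sum_Un Int_Diff simp del: Un_Diff_cancel)
  then have indCUD: "independent (C \<union> D)" by simp
  have "dim (S \<inter> T) = card B"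
    by (rule dim_unique [OF B indB refl])
  moreover have "dim S = card C"
    by (metis \<open>C \<subseteq> S\<close> \<open>independent C\<close> \<open>S \<subseteq> span C\<close> basis_card_eq_dim)
  moreover have "dim T = card D"
    by (metis \<open>D \<subseteq> T\<close> \<open>independent D\<close> \<open>T \<subseteq> span D\<close> basis_card_eq_dim)
  moreover have "dim ?ST = card(C \<union> D)"
  proof -
    have *: "\<And>x y. \<lbrakk>x \<in> S; y \<in> T\<rbrakk> \<Longrightarrow> x + y \<in> span (C \<union> D)"
      by (meson \<open>S \<subseteq> span C\<close> \<open>T \<subseteq> span D\<close> span_add span_mono subsetCE sup.cobounded1 sup.cobounded2)
    show ?thesis
      by (auto intro: * dim_unique [OF CUD _ indCUD refl])
  qed
  ultimately show ?thesis
    using \<open>B = C \<inter> D\<close> [symmetric]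
    by (simp add: \<open>finite C\<close> \<open>finite D\<close> card_Un_Int)
qed

end



context vector_space begin

lemma dim_mod_ineq:
  assumes "subspace X" "subspace Y" "subspace Z" "X \<subseteq> Y" "finite W" "Y \<subseteq> span W"
  shows "int (dim (Y \<inter> Z)) - int (dim (X \<inter> Z)) \<le> int (dim Y) - int (dim X)"
proof -
  let ?P = "{x + y |x y. x \<in> X \<and> y \<in> Y \<inter> Z}"
  have sYZ: "subspace (Y \<inter> Z)" using assms by (simp add: subspace_inter)
  have "dim ?P + dim (X \<inter> (Y \<inter> Z)) = dim X + dim (Y \<inter> Z)"
    by (rule dim_sums_Int_fd[OF assms(1) sYZ assms(5) _ assms(5)]) (use assms in auto)
  moreover have "X \<inter> (Y \<inter> Z) = X \<inter> Z" using assms(4) by blast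
  ultimately have e: "dim ?P + dim (X \<inter> Z) = dim X + dim (Y \<inter> Z)" by simp
  have "?P \<subseteq> Y" using assms(2,4) subspace_add by blast
  hence "dim ?P \<le> dim Y" using dim_mono_fd[OF assms(5,6)] by blast
  thus ?thesis using e by linarith
qed

end

lemma lin_on_zero:
  assumes "lin_on s1 s2 A g" "0 \<in> A" shows "g 0 = (0::'w::ab_group_add)"
proof -
  have "g (0 + 0) = g 0 + g 0" using assms unfolding lin_on_def by blast
  thus ?thesis by simp
qed

lemma lin_on_diff:
  fixes s1 :: "'f::field \<Rightarrow> 'v::ab_group_add \<Rightarrow> 'v" and s2 :: "'f \<Rightarrow> 'w::ab_group_add \<Rightarrow> 'w"
  assumes "lin_on s1 s2 A g" "module.subspace s1 A" "vector_space s1" "x \<in> A" "y \<in> A"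
  shows "g (x - y) = g x - g y"
proof -
  interpret vector_space s1 by fact
  have "x - y \<in> A" using assms subspace_diff by blast
  hence "g ((x - y) + y) = g (x - y) + g y" using assms unfolding lin_on_def by blast
  thus ?thesis by (simp add: algebra_simps)
qed

lemma lin_on_comp:
  assumes "lin_on s1 s2 A g" "g ` A \<subseteq> B" "lin_on s2 s3 B h"
  shows "lin_on s1 s3 A (h \<circ> g)"
  using assms unfolding lin_on_def by (auto simp: image_subset_iff)

lemma lin_on_subset: "lin_on s1 s2 A g \<Longrightarrow> B \<subseteq> A \<Longrightarrow> lin_on s1 s2 B g"
  unfolding lin_on_def by blast

context vector_space_pair begin

lemma lin_on_sum:
  assumes "lin_on s1 s2 A g" "vs1.subspace A" "finite F" "F \<subseteq> A"
  shows "g (\<Sum>x\<in>F. s1 (u x) x) = (\<Sum>x\<in>F. s2 (u x) (g x))"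
  using assms(3,4)
proof (induction F rule: finite_induct)
  case empty
  then show ?case using lin_on_zero[OF assms(1) vs1.subspace_0[OF assms(2)]] by simp
next
  case (insert x F)
  have "(\<Sum>x\<in>F. s1 (u x) x) \<in> A"
    using insert assms(2) by (auto intro!: vs1.subspace_sum vs1.subspace_scale)
  moreover have "s1 (u x) x \<in> A" using insert assms(2) by (auto intro!: vs1.subspace_scale)
  ultimately show ?case using insert assms(1) unfolding lin_on_def by simp
qed

lemma lin_on_image_subspace:
  assumes "lin_on s1 s2 A g" "vs1.subspace A"
  shows "vs2.subspace (g ` A)"
  unfolding vs2.subspace_def
proof (intro conjI ballI allI)
  show "0 \<in> g ` A" using lin_on_zero[OF assms(1) vs1.subspace_0[OF assms(2)]] vs1.subspace_0[OF assms(2)]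
    by (metis image_eqI)
  fix x y assume "x \<in> g ` A" "y \<in> g ` A"
  then obtain a b where "a \<in> A" "b \<in> A" "x = g a" "y = g b" by blast
  thus "x + y \<in> g ` A" using assms vs1.subspace_add unfolding lin_on_def
    by (metis image_eqI)
next
  fix c x assume "x \<in> g ` A"
  then obtain a where "a \<in> A" "x = g a" by blast
  thus "s2 c x \<in> g ` A" using assms vs1.subspace_scale unfolding lin_on_def
    by (metis image_eqI)
qed

lemma lin_on_preimage_subspace:
  assumes "lin_on s1 s2 A g" "vs1.subspace A" "vs2.subspace T"
  shows "vs1.subspace {x\<in>A. g x \<in> T}"
  unfolding vs1.subspace_def
proof (intro conjI ballI allI)
  show "0 \<in> {x\<in>A. g x \<in> T}"
    using lin_on_zero[OF assms(1) vs1.subspace_0[OF assms(2)]] vs1.subspace_0[OF assms(2)]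
      vs2.subspace_0[OF assms(3)] by simp
  fix x y assume "x \<in> {x\<in>A. g x \<in> T}" "y \<in> {x\<in>A. g x \<in> T}"
  thus "x + y \<in> {x\<in>A. g x \<in> T}" using assms vs1.subspace_add vs2.subspace_add unfolding lin_on_def
    by auto
next
  fix c x assume "x \<in> {x\<in>A. g x \<in> T}"
  thus "s1 c x \<in> {x\<in>A. g x \<in> T}" using assms vs1.subspace_scale vs2.subspace_scale unfolding lin_on_def
    by auto
qed

lemma rank_nullity_on:
  assumes lin: "lin_on s1 s2 A g" and sA: "vs1.subspace A" and fW: "finite W" and AW: "A \<subseteq> vs1.span W"
  shows "vs1.dim A = vs2.dim (g ` A) + vs1.dim {x\<in>A. g x = 0}"
proof -
  define K where "K = {x\<in>A. g x = 0}"
  obtain C where C: "C \<subseteq> K" "vs1.independent C" "K \<subseteq> vs1.span C" "card C = vs1.dim K"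
    using vs1.basis_exists by blast
  have CA: "C \<subseteq> A" using C(1) K_def by auto
  obtain B where B: "C \<subseteq> B" "B \<subseteq> A" "vs1.independent B" "A \<subseteq> vs1.span B"
    using vs1.maximal_independent_subset_extend[OF CA C(2)] by metis
  have fB: "finite B" using vs1.fdim_indep_finite[OF fW AW B(2,3)] .
  have fC: "finite C" using fB B(1) finite_subset by blast
  have dA: "vs1.dim A = card B" using vs1.basis_card_eq_dim[OF B(2,4,3)] by simp
  define D where "D = B - C"
  have fD: "finite D" using fB D_def by simp
  have DA: "D \<subseteq> A" using B(2) D_def by blast
  have gC: "\<And>c. c \<in> C \<Longrightarrow> g c = 0" using C(1) K_def by auto
  have key: "\<forall>d\<in>D. u d = 0" if h: "(\<Sum>d\<in>D. s2 (u d) (g d)) = 0" for u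
  proof -
    define x where "x = (\<Sum>d\<in>D. s1 (u d) d)"
    have xA: "x \<in> A" unfolding x_def using DA sA by (auto intro!: vs1.subspace_sum vs1.subspace_scale)
    have "g x = 0" unfolding x_def using lin_on_sum[OF lin sA fD DA] h by simp
    hence "x \<in> vs1.span C" using xA C(3) K_def by blast
    then obtain e where e: "(\<Sum>c\<in>C. s1 (e c) c) = x" using vs1.span_finite[OF fC] by auto
    define w where "w b = (if b \<in> C then - e b else u b)" for b
    have "(\<Sum>b\<in>B. s1 (w b) b) = (\<Sum>b\<in>B - C. s1 (w b) b) + (\<Sum>b\<in>C. s1 (w b) b)"
      using sum.subset_diff[OF B(1) fB] .
    also have "(\<Sum>b\<in>B - C. s1 (w b) b) = x" unfolding x_def D_def w_def
      by (rule sum.cong) auto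
    also have "(\<Sum>b\<in>C. s1 (w b) b) = (\<Sum>b\<in>C. - s1 (e b) b)" unfolding w_def
      by (rule sum.cong) (auto simp: vs1.scale_minus_left)
    also have "\<dots> = - x" using e by (simp add: sum_negf)
    finally have "(\<Sum>b\<in>B. s1 (w b) b) = 0" by simp
    hence "\<forall>b\<in>B. w b = 0" using vs1.independentD[OF B(3) fB order_refl] by blast
    thus ?thesis unfolding D_def w_def by auto
  qed
  have inj: "inj_on g D"
  proof (rule inj_onI, rule ccontr)
    fix d1 d2 assume d: "d1 \<in> D" "d2 \<in> D" "g d1 = g d2" "d1 \<noteq> d2"
    have "g (d1 - d2) = 0" using lin_on_diff[OF lin sA vs1.vector_space_axioms, of d1 d2] d DA by auto
    moreover have "d1 - d2 \<in> A" using d DA sA vs1.subspace_diff by blast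
    ultimately have "d1 - d2 \<in> vs1.span C" using C(3) K_def by blast
    hence "d1 - d2 \<in> vs1.span (B - {d1})"
    proof -
      have "C \<subseteq> B - {d1}" using B(1) d(1) D_def by blast
      thus ?thesis using vs1.span_mono[of C "B - {d1}"] \<open>d1 - d2 \<in> vs1.span C\<close> by blast
    qed
    moreover have "d2 \<in> vs1.span (B - {d1})" using d D_def by (auto intro: vs1.span_base)
    ultimately have "(d1 - d2) + d2 \<in> vs1.span (B - {d1})" by (rule vs1.span_add)
    hence "vs1.dependent B" using d(1) D_def vs1.dependent_def by auto
    thus False using B(3) by blast
  qed
  have indep: "vs2.independent (g ` D)"
  proof
    assume "vs2.dependent (g ` D)"
    then obtain w where w: "\<exists>v\<in>g ` D. w v \<noteq> 0" "(\<Sum>v\<in>g ` D. s2 (w v) v) = 0"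
      using vs2.dependent_finite[of "g ` D"] fD by auto
    have "(\<Sum>d\<in>D. s2 (w (g d)) (g d)) = 0" using w(2) sum.reindex[OF inj, of "\<lambda>v. s2 (w v) v"] by simp
    hence "\<forall>d\<in>D. w (g d) = 0" by (rule key)
    thus False using w(1) by auto
  qed
  have span: "g ` A \<subseteq> vs2.span (g ` D)"
  proof
    fix y assume "y \<in> g ` A"
    then obtain x where x: "x \<in> A" "y = g x" by blast
    have "x \<in> range (\<lambda>u. \<Sum>v\<in>B. s1 (u v) v)" using x B(4) vs1.span_finite[OF fB] by blast
    then obtain u where u: "(\<Sum>b\<in>B. s1 (u b) b) = x" by (metis (no_types, lifting) rangeE)
    have "y = (\<Sum>b\<in>B. s2 (u b) (g b))" using x(2) u[symmetric] lin_on_sum[OF lin sA fB B(2), of u] by simp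
    also have "\<dots> = (\<Sum>b\<in>B - C. s2 (u b) (g b)) + (\<Sum>b\<in>C. s2 (u b) (g b))"
      using sum.subset_diff[OF B(1) fB] .
    also have "(\<Sum>b\<in>C. s2 (u b) (g b)) = 0" using gC by simp
    finally have yeq: "y = (\<Sum>d\<in>D. s2 (u d) (g d))" unfolding D_def by simp
    have "(\<Sum>d\<in>D. s2 (u d) (g d)) \<in> vs2.span (g ` D)"
      by (rule vs2.span_sum, rule vs2.span_scale, rule vs2.span_base, blast)
    thus "y \<in> vs2.span (g ` D)" using yeq by simp
  qed
  have "card (g ` D) = vs2.dim (g ` A)"
    using vs2.basis_card_eq_dim[OF _ span indep] DA by blast
  hence "vs2.dim (g ` A) = card D" using card_image[OF inj] by simp
  moreover have "card D = card B - card C" unfolding D_def using card_Diff_subset[OF fC B(1)] .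
  moreover have "card C \<le> card B" using card_mono[OF fB B(1)] .
  ultimately show ?thesis using dA C(4) K_def by simp
qed

end




lemma pm_vs: "pers_module s n V f \<Longrightarrow> vector_space s"
  unfolding pers_module_def by blast

lemma pm_parts1:
  assumes "pers_module s n V f"
  shows "\<forall>i. 1 \<le> i \<and> i \<le> n \<longrightarrow> module.subspace s (V i)
          \<and> (\<exists>B. finite B \<and> B \<subseteq> V i \<and> V i = module.span s B)"
  using assms unfolding pers_module_def by (rule conjunct1[OF conjunct2])

lemma pm_parts2:
  assumes "pers_module s n V f"
  shows "\<forall>i. 1 \<le> i \<and> i < n \<longrightarrow> lin_on s s (V i) (f i) \<and> f i ` V i \<subseteq> V (Suc i)"
  using assms unfolding pers_module_def by (rule conjunct2[OF conjunct2])

lemma pm_sub: assumes "pers_module s n V f" "1 \<le> i" "i \<le> n" shows "module.subspace s (V i)"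
  using pm_parts1[OF assms(1), rule_format, OF conjI[OF assms(2,3)]] by (rule conjunct1)

lemma pm_fin: assumes "pers_module s n V f" "1 \<le> i" "i \<le> n"
  shows "\<exists>B. finite B \<and> B \<subseteq> V i \<and> V i = module.span s B"
  using pm_parts1[OF assms(1), rule_format, OF conjI[OF assms(2,3)]] by (rule conjunct2)

lemma pm_f: assumes "pers_module s n V f" "1 \<le> i" "i < n"
  shows "lin_on s s (V i) (f i) \<and> f i ` V i \<subseteq> V (Suc i)"
  using pm_parts2[OF assms(1), rule_format, OF conjI[OF assms(2,3)]] .

lemma pmV_sub:
  assumes "pers_module s n V f" shows "module.subspace s (pmV n V i)"
proof -
  interpret vector_space s using pm_vs[OF assms] .
  show ?thesis
  proof (cases "1 \<le> i \<and> i \<le> n")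
    case True
    hence "pmV n V i = V i" by (simp add: pmV_def)
    thus ?thesis using pm_sub[OF assms] True by simp
  next
    case False
    have "subspace {0}" by (simp add: subspace_def)
    moreover have "pmV n V i = {0}" using False unfolding pmV_def by (rule if_not_P)
    ultimately show ?thesis by simp
  qed
qed

lemma pmV_fd:
  assumes "pers_module s n V f" shows "\<exists>W. finite W \<and> pmV n V i \<subseteq> module.span s W"
proof -
  interpret vector_space s using pm_vs[OF assms] .
  show ?thesis
  proof (cases "1 \<le> i \<and> i \<le> n")
    case True
    then obtain B where "finite B" "V i = span B" using pm_fin[OF assms] by blast
    thus ?thesis using True unfolding pmV_def by auto
  next
    case False
    hence "pmV n V i = {0}" unfolding pmV_def by (rule if_not_P)
    thus ?thesis by (intro exI[of _ "{}"]) (simp add: span_zero)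
  qed
qed

lemma pmV_zero:
  assumes "pers_module s n V f" shows "0 \<in> pmV n V i"
proof -
  interpret vector_space s using pm_vs[OF assms] .
  show ?thesis using pmV_sub[OF assms] by (rule subspace_0)
qed

lemma pmf_lin:
  assumes "pers_module s n V f"
  shows "lin_on s s (pmV n V i) (pmf n f i) \<and> pmf n f i ` pmV n V i \<subseteq> pmV n V (Suc i)"
proof -
  interpret vector_space s using pm_vs[OF assms] .
  show ?thesis
  proof (cases "1 \<le> i \<and> i < n")
    case True
    hence e: "pmf n f i = f i" by (auto simp: pmf_def)
    have "pmV n V i = V i" "pmV n V (Suc i) = V (Suc i)" using True by (auto simp: pmV_def)
    thus ?thesis using True pm_f[OF assms] unfolding e by simp
  next
    case False
    hence e: "pmf n f i = (\<lambda>x. 0)" by (auto simp: pmf_def)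
    show ?thesis unfolding e lin_on_def using pmV_zero[OF assms] by auto
  qed
qed




lemma fcomp_lin:
  assumes "pers_module s n V f"
  shows "lin_on s s (pmV n V a) (fcomp n f a k) \<and> fcomp n f a k ` pmV n V a \<subseteq> pmV n V (a + k)"
proof (induction k)
  case 0
  then show ?case by (simp add: lin_on_def)
next
  case (Suc k)
  have h1: "lin_on s s (pmV n V a) (fcomp n f a k)" and h2: "fcomp n f a k ` pmV n V a \<subseteq> pmV n V (a + k)"
    using Suc.IH by auto
  have p: "lin_on s s (pmV n V (a + k)) (pmf n f (a + k))" "pmf n f (a + k) ` pmV n V (a + k) \<subseteq> pmV n V (Suc (a + k))"
    using pmf_lin[OF assms, of "a + k"] by auto
  have "lin_on s s (pmV n V a) (pmf n f (a + k) \<circ> fcomp n f a k)"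
    by (rule lin_on_comp[OF h1 h2 p(1)])
  moreover have "(pmf n f (a + k) \<circ> fcomp n f a k) ` pmV n V a \<subseteq> pmV n V (a + Suc k)"
    using h2 p(2) by (auto simp: image_subset_iff)
  ultimately show ?case unfolding fcomp.simps by blast
qed

lemma fcomp_shift: "fcomp n f a (Suc k) = fcomp n f (Suc a) k \<circ> pmf n f a"
proof (induction k)
  case 0 then show ?case by simp
next
  case (Suc k)
  have "fcomp n f a (Suc (Suc k)) = pmf n f (a + Suc k) \<circ> fcomp n f a (Suc k)" by simp
  also have "\<dots> = pmf n f (Suc a + k) \<circ> (fcomp n f (Suc a) k \<circ> pmf n f a)" by (simp only: Suc.IH add_Suc_right add_Suc)
  finally show ?case by (simp add: comp_assoc)
qed

lemma fab_id[simp]: "fab n f a a = id" by (simp add: fab_def)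

lemma fab_left: "a < b \<Longrightarrow> fab n f a b = fab n f (Suc a) b \<circ> pmf n f a"
  unfolding fab_def using fcomp_shift[of n f a "b - Suc a"]
  by (metis Suc_diff_Suc diff_Suc_Suc)

lemma fab_right: "a \<le> b \<Longrightarrow> fab n f a (Suc b) = pmf n f b \<circ> fab n f a b"
  unfolding fab_def by (simp add: Suc_diff_le)

lemma fab_lin:
  assumes "pers_module s n V f" "a \<le> b"
  shows "lin_on s s (pmV n V a) (fab n f a b) \<and> fab n f a b ` pmV n V a \<subseteq> pmV n V b"
  using fcomp_lin[OF assms(1), of a "b - a"] assms(2) unfolding fab_def by simp

lemma kerf_sub:
  assumes "pers_module s n V f" shows "module.subspace s (kerf n V f b)"
proof -
  interpret vector_space_pair s s using pm_vs[OF assms] by (simp add: vector_space_pair_def)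
  have "kerf n V f b = {x \<in> pmV n V b. pmf n f b x \<in> {0}}" unfolding kerf_def by simp
  moreover have "vs1.subspace {x \<in> pmV n V b. pmf n f b x \<in> {0}}"
    by (rule lin_on_preimage_subspace) (use pmf_lin[OF assms] pmV_sub[OF assms] in \<open>auto simp: vs1.subspace_def\<close>)
  ultimately show ?thesis by simp
qed

lemma Sab_sub:
  assumes "pers_module s n V f"
  shows "module.subspace s (Sab n V f a b) \<and> Sab n V f a b \<subseteq> pmV n V b"
proof -
  interpret vector_space_pair s s using pm_vs[OF assms] by (simp add: vector_space_pair_def)
  show ?thesis
  proof (cases "1 \<le> a \<and> a \<le> b \<and> b \<le> n")
    case True
    have "vs1.subspace (fab n f a b ` pmV n V a)"
      using lin_on_image_subspace fab_lin[OF assms] True pmV_sub[OF assms] by blast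
    hence "vs1.subspace (fab n f a b ` pmV n V a \<inter> kerf n V f b)"
      using kerf_sub[OF assms] vs1.subspace_inter by blast
    moreover have "kerf n V f b \<subseteq> pmV n V b" unfolding kerf_def by auto
    ultimately show ?thesis using True unfolding Sab_def by auto
  next
    case False
    thus ?thesis unfolding Sab_def using pmV_zero[OF assms] by (auto simp: vs1.subspace_def)
  qed
qed

lemma Sab_mono:
  assumes "pers_module s n V f" "1 \<le> a" "a \<le> b" "b \<le> n"
  shows "Sab n V f (a - 1) b \<subseteq> Sab n V f a b"
proof (cases "a = 1")
  case True
  interpret vector_space s using pm_vs[OF assms(1)] .
  have "Sab n V f (a - 1) b = {0}" using True unfolding Sab_def by simp
  moreover have "0 \<in> Sab n V f a b" using Sab_sub[OF assms(1), of a b] subspace_0 by blast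
  ultimately show ?thesis by simp
next
  case False
  hence a1: "1 \<le> a - 1" "a - 1 < b" using assms by auto
  have e: "fab n f (a - 1) b = fab n f a b \<circ> pmf n f (a - 1)"
    using fab_left[OF a1(2)] False assms(2) by (simp add: Suc_diff_1)
  have "pmf n f (a - 1) ` pmV n V (a - 1) \<subseteq> pmV n V a"
    using pmf_lin[OF assms(1), of "a - 1"] False assms(2) by (simp add: Suc_diff_1)
  thus ?thesis using a1 assms unfolding Sab_def e by auto
qed




lemma tele: fixes h :: "nat \<Rightarrow> int" and k :: nat shows "(\<Sum>i=1..k. h i - h (i - 1)) = h k - h 0"
  by (induction k) (auto simp: atLeastAtMostSuc_conv)

lemma chain_sum:
  fixes p q :: "nat \<Rightarrow> int"
  assumes "\<And>k. 1 \<le> k \<Longrightarrow> k < m \<Longrightarrow> p k \<le> q (Suc k)" "1 \<le> m"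
  shows "(\<Sum>k=1..m. p k - q k) \<le> p m - q 1"
  using assms
proof (induction m)
  case 0 then show ?case by simp
next
  case (Suc m)
  show ?case
  proof (cases "m = 0")
    case True then show ?thesis by simp
  next
    case False
    hence "(\<Sum>k=1..m. p k - q k) \<le> p m - q 1" using Suc by auto
    moreover have "p m \<le> q (Suc m)" using Suc False by auto
    ultimately show ?thesis by (simp add: atLeastAtMostSuc_conv)
  qed
qed

lemma sum_if_le:
  fixes F :: "nat \<Rightarrow> int"
  assumes "m \<le> N"
  shows "(\<Sum>k=1..N. if k \<le> m then F k else 0) = (\<Sum>k=1..m. F k)"
proof -
  have "(\<Sum>k=1..N. if k \<le> m then F k else 0) = sum F {k\<in>{1..N}. k \<le> m}"
    by (rule sum.inter_filter[symmetric]) simp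
  moreover have "{k\<in>{1..N}. k \<le> m} = {1..m}" using assms by auto
  ultimately show ?thesis by simp
qed

lemma mor_parts:
  assumes "pm_morphism sV sU n V f U g \<alpha>"
  shows "\<forall>i. 1 \<le> i \<and> i \<le> n \<longrightarrow> lin_on sV sU (V i) (\<alpha> i) \<and> \<alpha> i ` V i \<subseteq> U i"
    "\<forall>i. 1 \<le> i \<and> i < n \<longrightarrow> (\<forall>x\<in>V i. \<alpha> (Suc i) (f i x) = g i (\<alpha> i x))"
  using assms unfolding pm_morphism_def by (rule conjunct1, rule conjunct2)

lemma mor_lin:
  assumes "pm_morphism sV sU n V f U g \<alpha>" "1 \<le> i" "i \<le> n"
  shows "lin_on sV sU (pmV n V i) (\<alpha> i) \<and> \<alpha> i ` pmV n V i \<subseteq> pmV n U i"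
proof -
  have "pmV n V i = V i" "pmV n U i = U i" using assms(2,3) by (auto simp: pmV_def)
  thus ?thesis using mor_parts(1)[OF assms(1), rule_format, OF conjI[OF assms(2,3)]] by simp
qed

lemma mor_comm:
  assumes "pm_morphism sV sU n V f U g \<alpha>" "1 \<le> i" "i < n" "x \<in> pmV n V i"
  shows "\<alpha> (Suc i) (pmf n f i x) = pmf n g i (\<alpha> i x)"
proof -
  have "pmV n V i = V i" using assms(2,3) by (auto simp: pmV_def)
  moreover have "pmf n f i x = f i x" "pmf n g i (\<alpha> i x) = g i (\<alpha> i x)" using assms(2,3) by (auto simp: pmf_def)
  ultimately show ?thesis using mor_parts(2)[OF assms(1), rule_format, OF conjI[OF assms(2,3)]] assms(4) by simp
qed

lemma apre_sub:
  assumes "pers_module sV n V f" "pers_module sU n U g" "pm_morphism sV sU n V f U g \<alpha>"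
    "1 \<le> i" "i \<le> n" "module.subspace sU T"
  shows "module.subspace sV (apre n V \<alpha> i T) \<and> apre n V \<alpha> i T \<subseteq> pmV n V i"
proof -
  interpret vector_space_pair sV sU using pm_vs[OF assms(1)] pm_vs[OF assms(2)] by (simp add: vector_space_pair_def)
  have "vs1.subspace {x \<in> pmV n V i. \<alpha> i x \<in> T}"
    by (rule lin_on_preimage_subspace) (use mor_lin[OF assms(3,4,5)] pmV_sub[OF assms(1)] assms(6) in auto)
  thus ?thesis unfolding apre_def by auto
qed

lemma X_zero_U:
  "pmX sV n V f U g \<alpha> c b 0 b' = 0"
  unfolding pmX_def by (simp add: Sab_def)

lemma X_zero_V:
  assumes "pers_module sV n V f" shows "pmX sV n V f U g \<alpha> 0 b a' b' = 0"
proof -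
  interpret vector_space sV using pm_vs[OF assms] .
  have "Sab n V f 0 b = {0}" by (simp add: Sab_def)
  thus ?thesis unfolding pmX_def by (simp add: dim_zero_sub)
qed




lemma part1:
  assumes PV: "pers_module sV n V f" and PU: "pers_module sU n U g"
    and Mo: "pm_morphism sV sU n V f U g \<alpha>"
    and ab: "1 \<le> a" "a \<le> b" "b \<le> n"
  shows "(\<Sum>b'=1..n. \<Sum>a'=1..b'. pmM sV n V f U g \<alpha> a b a' b')
      \<le> int (vector_space.dim sV (Sab n V f a b)) - int (vector_space.dim sV (Sab n V f (a - 1) b))"
proof -
  interpret vector_space_pair sV sU using pm_vs[OF PV] pm_vs[OF PU] by (simp add: vector_space_pair_def)
  let ?X = "pmX sV n V f U g \<alpha>"
  define S1 where "S1 = Sab n V f a b"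
  define S0 where "S0 = Sab n V f (a - 1) b"
  define \<psi> where "\<psi> T = int (vs1.dim (S1 \<inter> T)) - int (vs1.dim (S0 \<inter> T))" for T
  define P where "P k = fab n f k b ` apre n V \<alpha> k (Sab n U g k k)" for k
  define Q where "Q k = fab n f k b ` apre n V \<alpha> k {0}" for k
  have inner: "(\<Sum>a'=1..b'. pmM sV n V f U g \<alpha> a b a' b') = ?X a b b' b' - ?X (a - 1) b b' b'" for b'
  proof -
    let ?h = "\<lambda>i. ?X a b i b' - ?X (a - 1) b i b'"
    have "(\<Sum>a'=1..b'. pmM sV n V f U g \<alpha> a b a' b') = (\<Sum>a'=1..b'. ?h a' - ?h (a' - 1))"
      by (rule sum.cong) (simp_all add: pmM_def)
    also have "\<dots> = ?h b' - ?h 0" by (rule tele)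
    finally show ?thesis by (simp add: X_zero_U)
  qed
  have Y: "?X a b k k - ?X (a - 1) b k k = (if k \<le> b then \<psi> (P k) - \<psi> (Q k) else 0)" for k
    unfolding pmX_def \<psi>_def P_def Q_def S1_def S0_def using ab by auto
  obtain W where W: "finite W" "pmV n V b \<subseteq> vs1.span W" using pmV_fd[OF PV] by blast
  have S1s: "vs1.subspace S1" "S1 \<subseteq> pmV n V b" using Sab_sub[OF PV] unfolding S1_def by auto
  have S0s: "vs1.subspace S0" "S0 \<subseteq> pmV n V b" using Sab_sub[OF PV] unfolding S0_def by auto
  have S01: "S0 \<subseteq> S1" unfolding S0_def S1_def by (rule Sab_mono[OF PV ab])
  have mono: "\<psi> T1 \<le> \<psi> T2" if T: "vs1.subspace T1" "vs1.subspace T2" "T1 \<subseteq> T2" "T2 \<subseteq> pmV n V b" for T1 T2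
  proof -
    have "int (vs1.dim ((S1 \<inter> T2) \<inter> S0)) - int (vs1.dim ((S1 \<inter> T1) \<inter> S0))
        \<le> int (vs1.dim (S1 \<inter> T2)) - int (vs1.dim (S1 \<inter> T1))"
      by (rule vs1.dim_mod_ineq[OF _ _ S0s(1) _ W(1)])
         (use T S1s W(2) vs1.subspace_inter in auto)
    moreover have "(S1 \<inter> T2) \<inter> S0 = S0 \<inter> T2" "(S1 \<inter> T1) \<inter> S0 = S0 \<inter> T1" using S01 by auto
    ultimately show ?thesis unfolding \<psi>_def by simp
  qed
  have PQs: "vs1.subspace (P k) \<and> P k \<subseteq> pmV n V b \<and> vs1.subspace (Q k) \<and> Q k \<subseteq> pmV n V b"
    if k: "1 \<le> k" "k \<le> b" for k
  proof -
    have kn: "k \<le> n" using k ab by simp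
    have fl: "lin_on sV sV (pmV n V k) (fab n f k b)" "fab n f k b ` pmV n V k \<subseteq> pmV n V b"
      using fab_lin[OF PV k(2)] by auto
    have z: "vs2.subspace {0}" by (simp add: vs2.subspace_def)
    have a1: "vs1.subspace (apre n V \<alpha> k (Sab n U g k k))" "apre n V \<alpha> k (Sab n U g k k) \<subseteq> pmV n V k"
      using apre_sub[OF PV PU Mo k(1) kn] Sab_sub[OF PU] by auto
    have a0: "vs1.subspace (apre n V \<alpha> k {0})" "apre n V \<alpha> k {0} \<subseteq> pmV n V k"
      using apre_sub[OF PV PU Mo k(1) kn z] by auto
    interpret vp: vector_space_pair sV sV by (simp add: vector_space_pair_def vs1.vector_space_axioms)
    have "vs1.subspace (P k)" unfolding P_def
      using vp.lin_on_image_subspace[OF lin_on_subset[OF fl(1) a1(2)] a1(1)] by simp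
    moreover have "vs1.subspace (Q k)" unfolding Q_def
      using vp.lin_on_image_subspace[OF lin_on_subset[OF fl(1) a0(2)] a0(1)] by simp
    moreover have "P k \<subseteq> pmV n V b" "Q k \<subseteq> pmV n V b" unfolding P_def Q_def using fl(2) a1(2) a0(2) by auto
    ultimately show ?thesis by blast
  qed
  have chain: "P k \<subseteq> Q (Suc k)" if k: "1 \<le> k" "k < b" for k
  proof
    fix x assume "x \<in> P k"
    then obtain v where v: "v \<in> pmV n V k" "\<alpha> k v \<in> Sab n U g k k" "x = fab n f k b v"
      unfolding P_def apre_def by auto
    have kn: "k < n" using k ab by simp
    have "\<alpha> k v \<in> kerf n U g k" using v(2) k kn unfolding Sab_def by (auto split: if_splits)
    hence g0: "pmf n g k (\<alpha> k v) = 0" unfolding kerf_def by simp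
    define w where "w = pmf n f k v"
    have wV: "w \<in> pmV n V (Suc k)" using pmf_lin[OF PV, of k] v(1) unfolding w_def by auto
    have "\<alpha> (Suc k) w = 0" unfolding w_def using mor_comm[OF Mo k(1) kn v(1)] g0 by simp
    hence "w \<in> apre n V \<alpha> (Suc k) {0}" using wV unfolding apre_def by simp
    moreover have "x = fab n f (Suc k) b w" using v(3) fab_left[OF k(2), of n f] unfolding w_def by simp
    ultimately show "x \<in> Q (Suc k)" unfolding Q_def by blast
  qed
  have "(\<Sum>b'=1..n. \<Sum>a'=1..b'. pmM sV n V f U g \<alpha> a b a' b')
      = (\<Sum>k=1..n. if k \<le> b then \<psi> (P k) - \<psi> (Q k) else 0)"
    using inner Y by simp
  also have "\<dots> = (\<Sum>k=1..b. \<psi> (P k) - \<psi> (Q k))" using sum_if_le[OF ab(3)] .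
  also have "\<dots> \<le> \<psi> (P b) - \<psi> (Q 1)"
    by (rule chain_sum) (use chain PQs ab mono in \<open>auto intro!: mono\<close>)
  finally have c1: "(\<Sum>b'=1..n. \<Sum>a'=1..b'. pmM sV n V f U g \<alpha> a b a' b') \<le> \<psi> (P b) - \<psi> (Q 1)" .
  have "\<psi> (P b) \<le> \<psi> (pmV n V b)"
    using PQs[of b] ab mono pmV_sub[OF PV] by auto
  moreover have "\<psi> (pmV n V b) = int (vs1.dim S1) - int (vs1.dim S0)"
    unfolding \<psi>_def using S1s S0s by (simp add: Int_absorb2)
  moreover have "0 \<le> \<psi> (Q 1)"
  proof -
    have "\<psi> {0} \<le> \<psi> (Q 1)"
      using PQs[of 1] ab by (intro mono) (auto simp: vs1.subspace_def)
    moreover have "\<psi> {0} = 0" unfolding \<psi>_def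
      using vs1.dim_zero_sub[of "S1 \<inter> {0}"] vs1.dim_zero_sub[of "S0 \<inter> {0}"] by auto
    ultimately show ?thesis by simp
  qed
  ultimately show ?thesis using c1 unfolding S1_def S0_def by linarith
qed




lemma tele2:
  fixes h :: "nat \<Rightarrow> int"
  assumes "1 \<le> c" "c \<le> Suc N"
  shows "(\<Sum>b=1..N. if c \<le> b then h b - h (Suc b) else 0) = h c - h (Suc N)"
  using assms
proof (induction N)
  case 0 then show ?case by simp
next
  case (Suc N)
  show ?case
  proof (cases "c = Suc (Suc N)")
    case True
    have "(\<Sum>b=1..Suc N. if c \<le> b then h b - h (Suc b) else 0) = (\<Sum>b=1..Suc N. 0)"
      by (rule sum.cong) (use True in auto)
    then show ?thesis using True by simp
  next
    case False
    hence "c \<le> Suc N" using Suc by simp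
    hence "(\<Sum>b=1..N. if c \<le> b then h b - h (Suc b) else 0) = h c - h (Suc N)" using Suc by simp
    then show ?thesis using \<open>c \<le> Suc N\<close> by (simp add: atLeastAtMostSuc_conv)
  qed
qed

lemma ker_step:
  assumes PV: "pers_module sV n V f" and b: "b' \<le> b" "1 \<le> b" "b \<le> n"
    and A0: "module.subspace sV A0" "A0 \<subseteq> pmV n V b'"
  shows "int (vector_space.dim sV (Sab n V f b b \<inter> fab n f b' b ` A0))
       = int (vector_space.dim sV (fab n f b' b ` A0)) - int (vector_space.dim sV (fab n f b' (Suc b) ` A0))"
proof -
  interpret vp: vector_space_pair sV sV using pm_vs[OF PV] by (simp add: vector_space_pair_def)
  define T where "T = fab n f b' b ` A0"
  have fl: "lin_on sV sV (pmV n V b') (fab n f b' b)" "fab n f b' b ` pmV n V b' \<subseteq> pmV n V b"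
    using fab_lin[OF PV b(1)] by auto
  have Ts: "vp.vs1.subspace T" unfolding T_def
    using vp.lin_on_image_subspace[OF lin_on_subset[OF fl(1) A0(2)] A0(1)] .
  have TV: "T \<subseteq> pmV n V b" unfolding T_def using fl(2) A0(2) by auto
  obtain W where W: "finite W" "pmV n V b \<subseteq> vp.vs1.span W" using pmV_fd[OF PV] by blast
  have pl: "lin_on sV sV T (pmf n f b)" using lin_on_subset[OF conjunct1[OF pmf_lin[OF PV]] TV] .
  have rn: "vp.vs1.dim T = vp.vs1.dim (pmf n f b ` T) + vp.vs1.dim {x\<in>T. pmf n f b x = 0}"
    by (rule vp.rank_nullity_on[OF pl Ts W(1)]) (use TV W(2) in auto)
  have "Sab n V f b b = kerf n V f b" using b unfolding Sab_def kerf_def by auto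
  hence e1: "Sab n V f b b \<inter> T = {x\<in>T. pmf n f b x = 0}" using TV unfolding kerf_def by auto
  have e2: "pmf n f b ` T = fab n f b' (Suc b) ` A0" unfolding T_def fab_right[OF b(1)] by (simp add: image_comp)
  show ?thesis using rn e1 e2 unfolding T_def by simp
qed

lemma part2:
  assumes PV: "pers_module sV n V f" and PU: "pers_module sU n U g"
    and Mo: "pm_morphism sV sU n V f U g \<alpha>"
    and ab: "1 \<le> a'" "a' \<le> b'" "b' \<le> n"
  shows "(\<Sum>b=1..n. \<Sum>a=1..b. pmM sV n V f U g \<alpha> a b a' b')
      \<le> int (vector_space.dim sU (Sab n U g a' b')) - int (vector_space.dim sU (Sab n U g (a' - 1) b'))"
proof -
  interpret vector_space_pair sV sU using pm_vs[OF PV] pm_vs[OF PU] by (simp add: vector_space_pair_def)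
  let ?X = "pmX sV n V f U g \<alpha>"
  define S1 where "S1 = Sab n U g a' b'"
  define S0 where "S0 = Sab n U g (a' - 1) b'"
  define A where "A = apre n V \<alpha> b' S1"
  define A' where "A' = apre n V \<alpha> b' S0"
  define hh where "hh k = int (vs1.dim (fab n f b' k ` A)) - int (vs1.dim (fab n f b' k ` A'))" for k
  have b'1: "1 \<le> b'" using ab by simp
  have S1s: "vs2.subspace S1" "S1 \<subseteq> pmV n U b'" using Sab_sub[OF PU] unfolding S1_def by auto
  have S0s: "vs2.subspace S0" "S0 \<subseteq> pmV n U b'" using Sab_sub[OF PU] unfolding S0_def by auto
  have S01: "S0 \<subseteq> S1" unfolding S0_def S1_def by (rule Sab_mono[OF PU ab])
  have As: "vs1.subspace A" "A \<subseteq> pmV n V b'" using apre_sub[OF PV PU Mo b'1 ab(3) S1s(1)] unfolding A_def by auto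
  have A's: "vs1.subspace A'" "A' \<subseteq> pmV n V b'" using apre_sub[OF PV PU Mo b'1 ab(3) S0s(1)] unfolding A'_def by auto
  have inner: "(\<Sum>a=1..b. pmM sV n V f U g \<alpha> a b a' b') = ?X b b a' b' - ?X b b (a' - 1) b'" for b
  proof -
    let ?h = "\<lambda>i. ?X i b a' b' - ?X i b (a' - 1) b'"
    have "(\<Sum>a=1..b. pmM sV n V f U g \<alpha> a b a' b') = (\<Sum>a=1..b. ?h a - ?h (a - 1))"
      by (rule sum.cong) (simp_all add: pmM_def)
    also have "\<dots> = ?h b - ?h 0" by (rule tele)
    finally show ?thesis by (simp add: X_zero_V[OF PV])
  qed
  have Z: "?X b b a' b' - ?X b b (a' - 1) b' = (if b' \<le> b then hh b - hh (Suc b) else 0)"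
    if b: "1 \<le> b" "b \<le> n" for b
  proof (cases "b' \<le> b")
    case True
    have "?X b b a' b' - ?X b b (a' - 1) b'
        = int (vs1.dim (Sab n V f b b \<inter> fab n f b' b ` A)) - int (vs1.dim (Sab n V f b b \<inter> fab n f b' b ` A'))"
      unfolding pmX_def A_def A'_def S1_def S0_def using True b by simp
    also have "\<dots> = hh b - hh (Suc b)" unfolding hh_def
      using ker_step[OF PV True b As] ker_step[OF PV True b A's] by simp
    finally show ?thesis using True by simp
  next
    case False
    then show ?thesis unfolding pmX_def by simp
  qed
  have "(\<Sum>b=1..n. \<Sum>a=1..b. pmM sV n V f U g \<alpha> a b a' b')
      = (\<Sum>b=1..n. if b' \<le> b then hh b - hh (Suc b) else 0)"
  proof (rule sum.cong[OF refl])
    fix b assume "b \<in> {1..n}"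
    thus "(\<Sum>a=1..b. pmM sV n V f U g \<alpha> a b a' b') = (if b' \<le> b then hh b - hh (Suc b) else 0)"
      using inner[of b] Z[of b] by simp
  qed
  also have "\<dots> = hh b' - hh (Suc n)" by (rule tele2) (use ab in auto)
  also have "hh (Suc n) = 0"
  proof -
    have "fab n f b' (Suc n) ` A \<subseteq> {0}" "fab n f b' (Suc n) ` A' \<subseteq> {0}"
      using fab_lin[OF PV, of b' "Suc n"] As(2) A's(2) ab by (auto simp: pmV_def)
    thus ?thesis unfolding hh_def using vs1.dim_zero_sub by simp
  qed
  also have "hh b' = int (vs1.dim A) - int (vs1.dim A')" unfolding hh_def by simp
  finally have c1: "(\<Sum>b=1..n. \<Sum>a=1..b. pmM sV n V f U g \<alpha> a b a' b') = int (vs1.dim A) - int (vs1.dim A')" by simp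
  obtain W where W: "finite W" "pmV n V b' \<subseteq> vs1.span W" using pmV_fd[OF PV] by blast
  obtain WU where WU: "finite WU" "pmV n U b' \<subseteq> vs2.span WU" using pmV_fd[OF PU] by blast
  have ml: "lin_on sV sU (pmV n V b') (\<alpha> b')" "\<alpha> b' ` pmV n V b' \<subseteq> pmV n U b'"
    using mor_lin[OF Mo b'1 ab(3)] by auto
  define K where "K = {x \<in> pmV n V b'. \<alpha> b' x = 0}"
  have rnA: "vs1.dim A = vs2.dim (\<alpha> b' ` A) + vs1.dim {x\<in>A. \<alpha> b' x = 0}"
    by (rule rank_nullity_on[OF lin_on_subset[OF ml(1) As(2)] As(1) W(1)]) (use As W in auto)
  have rnA': "vs1.dim A' = vs2.dim (\<alpha> b' ` A') + vs1.dim {x\<in>A'. \<alpha> b' x = 0}"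
    by (rule rank_nullity_on[OF lin_on_subset[OF ml(1) A's(2)] A's(1) W(1)]) (use A's W in auto)
  have "{x\<in>A. \<alpha> b' x = 0} = K" "{x\<in>A'. \<alpha> b' x = 0} = K"
    unfolding A_def A'_def K_def apre_def using vs2.subspace_0[OF S1s(1)] vs2.subspace_0[OF S0s(1)] by auto
  hence c2: "int (vs1.dim A) - int (vs1.dim A') = int (vs2.dim (\<alpha> b' ` A)) - int (vs2.dim (\<alpha> b' ` A'))"
    using rnA rnA' by simp
  define R where "R = \<alpha> b' ` pmV n V b'"
  have Rs: "vs2.subspace R" unfolding R_def by (rule lin_on_image_subspace[OF ml(1) pmV_sub[OF PV]])
  have "\<alpha> b' ` A = S1 \<inter> R" "\<alpha> b' ` A' = S0 \<inter> R" unfolding A_def A'_def R_def apre_def by auto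
  moreover have "int (vs2.dim (S1 \<inter> R)) - int (vs2.dim (S0 \<inter> R)) \<le> int (vs2.dim S1) - int (vs2.dim S0)"
    by (rule vs2.dim_mod_ineq[OF S0s(1) S1s(1) Rs S01 WU(1)]) (use S1s WU in auto)
  ultimately show ?thesis using c1 c2 unfolding S1_def S0_def by simp
qed



theorem mainTheorem1:
  fixes sV :: "'f::field \<Rightarrow> 'v::ab_group_add \<Rightarrow> 'v"
    and sU :: "'f \<Rightarrow> 'u::ab_group_add \<Rightarrow> 'u"
    and n :: nat and V :: "nat \<Rightarrow> 'v set" and f :: "nat \<Rightarrow> 'v \<Rightarrow> 'v"
    and U :: "nat \<Rightarrow> 'u set" and g :: "nat \<Rightarrow> 'u \<Rightarrow> 'u"
    and \<alpha> :: "nat \<Rightarrow> 'v \<Rightarrow> 'u"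
  assumes "pers_module sV n V f" and "pers_module sU n U g"
    and "pm_morphism sV sU n V f U g \<alpha>"
  shows "(\<forall>a b. 1 \<le> a \<and> a \<le> b \<and> b \<le> n \<longrightarrow>
            (\<Sum>b'=1..n. \<Sum>a'=1..b'. pmM sV n V f U g \<alpha> a b a' b')
              \<le> int (vector_space.dim sV (Sab n V f a b)) - int (vector_space.dim sV (Sab n V f (a - 1) b))
            \<and> int (vector_space.dim sV (Sab n V f a b)) - int (vector_space.dim sV (Sab n V f (a - 1) b))
              = pmD sV n V f a b)
       \<and> (\<forall>a' b'. 1 \<le> a' \<and> a' \<le> b' \<and> b' \<le> n \<longrightarrow>
            (\<Sum>b=1..n. \<Sum>a=1..b. pmM sV n V f U g \<alpha> a b a' b')
              \<le> int (vector_space.dim sU (Sab n U g a' b')) - int (vector_space.dim sU (Sab n U g (a' - 1) b'))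
            \<and> int (vector_space.dim sU (Sab n U g a' b')) - int (vector_space.dim sU (Sab n U g (a' - 1) b'))
              = pmD sU n U g a' b')"
  proof (intro conjI allI impI)
  fix a b :: nat assume h: "1 \<le> a \<and> a \<le> b \<and> b \<le> n"
  show "(\<Sum>b'=1..n. \<Sum>a'=1..b'. pmM sV n V f U g \<alpha> a b a' b')
              \<le> int (vector_space.dim sV (Sab n V f a b)) - int (vector_space.dim sV (Sab n V f (a - 1) b))"
    using part1[OF assms] h by blast
  show "int (vector_space.dim sV (Sab n V f a b)) - int (vector_space.dim sV (Sab n V f (a - 1) b))
              = pmD sV n V f a b" by (simp add: pmD_def)
next
  fix a' b' :: nat assume h: "1 \<le> a' \<and> a' \<le> b' \<and> b' \<le> n"
  show "(\<Sum>b=1..n. \<Sum>a=1..b. pmM sV n V f U g \<alpha> a b a' b')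
              \<le> int (vector_space.dim sU (Sab n U g a' b')) - int (vector_space.dim sU (Sab n U g (a' - 1) b'))"
    using part2[OF assms] h by blast
  show "int (vector_space.dim sU (Sab n U g a' b')) - int (vector_space.dim sU (Sab n U g (a' - 1) b'))
              = pmD sU n U g a' b'" by (simp add: pmD_def)
qed

end
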